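(* Let $T$ be a triangulation of the oriented 2-sphere (a simplicial complex) with $N+3$ vertices, and $\mathcal E_0$ a set of $2N$ edges whose complement $\bar{\mathcal E}_0$ is a cycle-rooted spanning tree with odd cycle. Order the edges with those of $\mathcal E_0$ first, write the vertex–edge incidence matrix as $R=(R_0\,|\,\tilde R_0)$ with $R_0$ the $(N+3)\times 2N$ block on $\mathcal E_0$ and $\tilde R_0$ the invertible $(N+3)\times(N+3)$ block on $\bar{\mathcal E}_0$, and set $M_0=\begin{pmatrix}\mathrm{Id}_{2N}\\-\tilde R_0^{-1}R_0\end{pmatrix}$ and $E_0=(E_{e,e'})_{e,e'\in\mathcal E_0}$. Then $E=M_0\,E_0\,M_0^T$.
   Context: $R_{v,e}=1$ if $v$ is an endpoint of $e$, else $0$. $E_{e,e'}$: if $e\neq e'$ lie in a common face whose edges in positive cyclic order are $\{a,b\},\{b,c\},\{c,a\}$, then $E_{e,e'}=-1$ if $e'$ immediately follows $e$ and $+1$ if $e'$ immediately precedes $e$; otherwise $E_{e,e'}=0$. A cycle-rooted spanning tree is a connected spanning subgraph with as many edges as vertices. *)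

theory Defs
  imports "HOL-Analysis.Analysis"
begin

(* V : vertex set; F : set of positively oriented faces, each face (a,b,c)
   listed together with its cyclic rotations (b,c,a), (c,a,b).
   The positive cyclic order of the edges of (a,b,c) is {a,b},{b,c},{c,a}. *)

definition tri_edges :: "('v \<times> 'v \<times> 'v) set \<Rightarrow> 'v set set" where
  "tri_edges F = {{a, b} | a b c. (a, b, c) \<in> F}"

definition oriented_sphere_triangulation :: "'v set \<Rightarrow> ('v \<times> 'v \<times> 'v) set \<Rightarrow> bool" where
  "oriented_sphere_triangulation V F \<longleftrightarrow>
     finite V \<and> F \<subseteq> V \<times> V \<times> V
     \<comment> \<open>every vertex lies in a face\<close>
     \<and> V = {a. \<exists>b c. (a, b, c) \<in> F}
     \<comment> \<open>faces are nondegenerate triangles\<close>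
     \<and> (\<forall>a b c. (a, b, c) \<in> F \<longrightarrow> a \<noteq> b \<and> b \<noteq> c \<and> a \<noteq> c)
     \<comment> \<open>faces are listed up to cyclic rotation\<close>
     \<and> (\<forall>a b c. (a, b, c) \<in> F \<longrightarrow> (b, c, a) \<in> F)
     \<comment> \<open>simplicial: a vertex triple spans at most one face (one orientation)\<close>
     \<and> (\<forall>a b c. (a, b, c) \<in> F \<longrightarrow> (b, a, c) \<notin> F)
     \<comment> \<open>coherent orientation of a closed surface: every edge lies in exactly two faces,
         which induce opposite directions on it\<close>
     \<and> (\<forall>a b c c'. (a, b, c) \<in> F \<longrightarrow> (a, b, c') \<in> F \<longrightarrow> c = c')
     \<and> (\<forall>a b. (\<exists>c. (a, b, c) \<in> F) \<longleftrightarrow> (\<exists>c. (b, a, c) \<in> F))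
     \<comment> \<open>the link of every vertex is a single cycle (surface, not pseudo-surface)\<close>
     \<and> (\<forall>v\<in>V. \<forall>a a'. (\<exists>c. (v, a, c) \<in> F) \<longrightarrow> (\<exists>c. (v, a', c) \<in> F) \<longrightarrow>
           (a, a') \<in> {(x, y). (v, x, y) \<in> F}\<^sup>*)
     \<comment> \<open>connected\<close>
     \<and> (\<forall>u\<in>V. \<forall>w\<in>V. (u, w) \<in> {(x, y). \<exists>z. (x, y, z) \<in> F}\<^sup>*)
     \<comment> \<open>Euler characteristic 2 (number of faces = card F / 3)\<close>
     \<and> int (card V) - int (card (tri_edges F)) + int (card F) div 3 = 2"

definition incidence :: "'v \<Rightarrow> 'v set \<Rightarrow> real" where
  "incidence v e = (if v \<in> e then 1 else 0)"

definition Emat :: "('v \<times> 'v \<times> 'v) set \<Rightarrow> 'v set \<Rightarrow> 'v set \<Rightarrow> real" where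
  "Emat F e e' =
     (if e \<noteq> e' \<and> (\<exists>a b c. (a, b, c) \<in> F \<and> e = {a, b} \<and> e' = {b, c}) then -1
      else if e \<noteq> e' \<and> (\<exists>a b c. (a, b, c) \<in> F \<and> e' = {a, b} \<and> e = {b, c}) then 1
      else 0)"

(* cycle-rooted spanning tree: connected spanning subgraph with as many edges as vertices *)
definition crst :: "'v set \<Rightarrow> 'v set set \<Rightarrow> 'v set set \<Rightarrow> bool" where
  "crst V Edges S \<longleftrightarrow> S \<subseteq> Edges \<and> card S = card V
     \<and> (\<forall>u\<in>V. \<forall>w\<in>V. (u, w) \<in> {(x, y). {x, y} \<in> S}\<^sup>*)"

(* S contains a cycle of odd length (for a CRST this is its unique cycle) *)
definition has_odd_cycle :: "'v set \<Rightarrow> 'v set set \<Rightarrow> bool" where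
  "has_odd_cycle V S \<longleftrightarrow> (\<exists>vs. 3 \<le> length vs \<and> odd (length vs) \<and> distinct vs \<and> set vs \<subseteq> V
     \<and> (\<forall>i < length vs. {vs ! i, vs ! ((i + 1) mod length vs)} \<in> S))"

definition is_block_inverse :: "'v set \<Rightarrow> 'v set set \<Rightarrow> ('v set \<Rightarrow> 'v \<Rightarrow> real) \<Rightarrow> bool" where
  "is_block_inverse V B Rinv \<longleftrightarrow>
     (\<forall>e\<in>B. \<forall>e'\<in>B. (\<Sum>v\<in>V. Rinv e v * incidence v e') = (if e = e' then 1 else 0))
   \<and> (\<forall>v\<in>V. \<forall>w\<in>V. (\<Sum>e\<in>B. incidence v e * Rinv e w) = (if v = w then 1 else 0))"

(* M_0 = (Id ; - Rt0^{-1} R0), rows indexed by all edges, columns by E0 *)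
definition M0 :: "'v set \<Rightarrow> 'v set set \<Rightarrow> ('v set \<Rightarrow> 'v \<Rightarrow> real) \<Rightarrow> 'v set \<Rightarrow> 'v set \<Rightarrow> real" where
  "M0 V E0 Rinv e f = (if e \<in> E0 then (if e = f then 1 else 0)
                        else - (\<Sum>v\<in>V. Rinv e v * incidence v f))"

end

theory Submission imports Defs "Jordan_Normal_Form.Determinant" begin


lemma mat_inv_exists:
  fixes g :: "nat \<Rightarrow> nat \<Rightarrow> real"
  assumes ker: "\<And>z. (\<forall>j<n. (\<Sum>i<n. g i j * z i) = 0) \<Longrightarrow> (\<forall>i<n. z i = 0)"
  shows "\<exists>h. (\<forall>i<n. \<forall>j<n. (\<Sum>k<n. h i k * g k j) = (if i=j then 1 else 0))
           \<and> (\<forall>i<n. \<forall>j<n. (\<Sum>k<n. g i k * h k j) = (if i=j then 1 else 0))"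
proof -
  define A where "A = mat n n (\<lambda>(i,j). g i j)"
  have A: "A \<in> carrier_mat n n" unfolding A_def by simp
  have AT: "transpose_mat A \<in> carrier_mat n n" using A by simp
  have "Determinant.det (transpose_mat A) \<noteq> 0"
  proof
    assume "Determinant.det (transpose_mat A) = 0"
    then obtain v where v: "v \<in> carrier_vec n" "v \<noteq> 0\<^sub>v n" "transpose_mat A *\<^sub>v v = 0\<^sub>v n"
      using det_0_iff_vec_prod_zero[OF AT] by blast
    have "\<forall>j<n. (\<Sum>i<n. g i j * vec_index v i) = 0"
    proof (intro allI impI)
      fix j assume j: "j < n"
      have "vec_index (transpose_mat A *\<^sub>v v) j = 0" using v(3) j by simp
      then show "(\<Sum>i<n. g i j * vec_index v i) = 0"
        using j v(1) A by (simp add: A_def scalar_prod_def lessThan_atLeast0 row_def)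
    qed
    from ker[OF this] have "v = 0\<^sub>v n" using v(1) by (intro eq_vecI) auto
    with v(2) show False by simp
  qed
  hence "Determinant.det A \<noteq> 0" using det_transpose[OF A] by simp
  from det_non_zero_imp_unit[OF A this, of undefined]
  obtain B where B: "B \<in> carrier_mat n n" "B * A = 1\<^sub>m n" "A * B = 1\<^sub>m n"
    by (auto simp: Units_def ring_mat_def)
  show ?thesis
  proof (intro exI[of _ "\<lambda>i j. B $$ (i,j)"] conjI allI impI)
    fix i j assume ij: "i < n" "j < n"
    have "(B * A) $$ (i,j) = (if i = j then 1 else 0)" using B ij by simp
    then show "(\<Sum>k<n. B $$ (i,k) * g k j) = (if i=j then 1 else 0)"
      using ij A B by (simp add: A_def scalar_prod_def lessThan_atLeast0 row_def col_def)
    have "(A * B) $$ (i,j) = (if i = j then 1 else 0)" using B ij by simp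
    then show "(\<Sum>k<n. g i k * B $$ (k,j)) = (if i=j then 1 else 0)"
      using ij A B by (simp add: A_def scalar_prod_def lessThan_atLeast0 row_def col_def)
  qed
qed



lemma ost_facts:
  assumes "oriented_sphere_triangulation V F"
  shows "finite V" "F \<subseteq> V \<times> V \<times> V"
    "\<And>a b c. (a,b,c) \<in> F \<Longrightarrow> a \<noteq> b \<and> b \<noteq> c \<and> a \<noteq> c"
    "\<And>a b c. (a,b,c) \<in> F \<Longrightarrow> (b,c,a) \<in> F"
    "\<And>a b c. (a,b,c) \<in> F \<Longrightarrow> (b,a,c) \<notin> F"
    "\<And>a b c c'. (a,b,c) \<in> F \<Longrightarrow> (a,b,c') \<in> F \<Longrightarrow> c = c'"
    "\<And>a b c. (a,b,c) \<in> F \<Longrightarrow> \<exists>c'. (b,a,c') \<in> F"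
proof -
  note h = assms[unfolded oriented_sphere_triangulation_def]
  show "finite V" using h by blast
  show "F \<subseteq> V \<times> V \<times> V" using h by (elim conjE) assumption
  show "\<And>a b c. (a,b,c) \<in> F \<Longrightarrow> a \<noteq> b \<and> b \<noteq> c \<and> a \<noteq> c" using h by blast
  show "\<And>a b c. (a,b,c) \<in> F \<Longrightarrow> (b,c,a) \<in> F" using h by blast
  show "\<And>a b c. (a,b,c) \<in> F \<Longrightarrow> (b,a,c) \<notin> F" using h by blast
  show "\<And>a b c c'. (a,b,c) \<in> F \<Longrightarrow> (a,b,c') \<in> F \<Longrightarrow> c = c'" using h by blast
  fix a b c assume "(a,b,c) \<in> F"
  moreover have "\<forall>a b. (\<exists>c. (a, b, c) \<in> F) \<longleftrightarrow> (\<exists>c. (b, a, c) \<in> F)" using h by blast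
  ultimately show "\<exists>c'. (b,a,c') \<in> F" by blast
qed

definition adjP :: "('v \<times> 'v \<times> 'v) set \<Rightarrow> 'v set \<Rightarrow> 'v set \<Rightarrow> bool" where
  "adjP F E1 E2 \<longleftrightarrow> (\<exists>a b d. (a,b,d) \<in> F \<and> E1 = {a,b} \<and> E2 = {b,d})"

lemma Emat_adjP: "Emat F e e' = (if e \<noteq> e' \<and> adjP F e e' then -1 else if e \<noteq> e' \<and> adjP F e' e then 1 else 0)"
  unfolding Emat_def adjP_def by blast

context
  fixes V F x y c c'
  assumes ost: "oriented_sphere_triangulation V F"
    and f1: "(x,y,c) \<in> F" and f2: "(y,x,c') \<in> F"
begin

lemma rot1: "(y,c,x) \<in> F" "(c,x,y) \<in> F" "(x,c',y) \<in> F" "(c',y,x) \<in> F"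
  using ost_facts(4)[OF ost] f1 f2 by blast+

lemma dist: "x \<noteq> y" "x \<noteq> c" "y \<noteq> c" "x \<noteq> c'" "y \<noteq> c'" "c \<noteq> c'"
  using ost_facts(3)[OF ost] ost_facts(5)[OF ost] f1 f2 by blast+

lemma L1: "adjP F e {x,y} \<longleftrightarrow> (e = {c,x} \<or> e = {c',y})"
proof
  assume "adjP F e {x,y}"
  then obtain a b d where abd: "(a,b,d) \<in> F" "e = {a,b}" "{x,y} = {b,d}" unfolding adjP_def by blast
  then consider "b = x" "d = y" | "b = y" "d = x" by (auto simp: doubleton_eq_iff)
  then show "e = {c,x} \<or> e = {c',y}"
  proof cases
    case 1
    then have "(x,y,a) \<in> F" using abd ost_facts(4)[OF ost] by blast
    then have "a = c" using ost_facts(6)[OF ost] f1 by blast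
    then show ?thesis using abd 1 by auto
  next
    case 2
    then have "(y,x,a) \<in> F" using abd ost_facts(4)[OF ost] by blast
    then have "a = c'" using ost_facts(6)[OF ost] f2 by blast
    then show ?thesis using abd 2 by auto
  qed
next
  assume "e = {c,x} \<or> e = {c',y}"
  then show "adjP F e {x,y}" unfolding adjP_def using rot1 by (auto simp: insert_commute)
qed

lemma L2: "adjP F {x,y} e \<longleftrightarrow> (e = {y,c} \<or> e = {x,c'})"
proof
  assume "adjP F {x,y} e"
  then obtain a b d where abd: "(a,b,d) \<in> F" "{x,y} = {a,b}" "e = {b,d}" unfolding adjP_def by blast
  then consider "a = x" "b = y" | "a = y" "b = x" by (auto simp: doubleton_eq_iff)
  then show "e = {y,c} \<or> e = {x,c'}"
  proof cases
    case 1
    then have "d = c" using abd ost_facts(6)[OF ost] f1 by blast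
    then show ?thesis using abd 1 by auto
  next
    case 2
    then have "d = c'" using abd ost_facts(6)[OF ost] f2 by blast
    then show ?thesis using abd 2 by auto
  qed
next
  assume "e = {y,c} \<or> e = {x,c'}"
  then show "adjP F {x,y} e" unfolding adjP_def using f1 f2 by (auto simp: insert_commute)
qed

definition "dl k e = (if e = k then (1::real) else 0)"

lemma Emat_col: "Emat F e {x,y} = - dl {c,x} e - dl {c',y} e + dl {y,c} e + dl {x,c'} e"
  unfolding Emat_adjP L1 L2 dl_def using dist by (auto simp: doubleton_eq_iff)

lemma Emat_row: "Emat F {x,y} e = dl {c,x} e + dl {c',y} e - dl {y,c} e - dl {x,c'} e"
  unfolding Emat_adjP L1 L2 dl_def using dist by (auto simp: doubleton_eq_iff)

lemma in_te: "{c,x} \<in> tri_edges F" "{c',y} \<in> tri_edges F" "{y,c} \<in> tri_edges F" "{x,c'} \<in> tri_edges F"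
  unfolding tri_edges_def using rot1 f1 f2 by blast+

lemma sum_dl: "finite (tri_edges F) \<Longrightarrow> k \<in> tri_edges F \<Longrightarrow> (\<Sum>e\<in>tri_edges F. g e * dl k e) = g k"
  unfolding dl_def by (simp add: if_distrib cong: if_cong)

lemma col_sum: "finite (tri_edges F) \<Longrightarrow> (\<Sum>e\<in>tri_edges F. incidence v e * Emat F e {x,y}) = 0"
  unfolding Emat_col by (simp add: algebra_simps sum.distrib sum_subtractf sum_dl in_te
     flip: sum_negf) (use dist in \<open>auto simp: incidence_def\<close>)

lemma row_sum: "finite (tri_edges F) \<Longrightarrow> (\<Sum>e\<in>tri_edges F. Emat F {x,y} e * incidence v e) = 0"
  unfolding Emat_row by (simp add: algebra_simps sum.distrib sum_subtractf sum_dl in_te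
     flip: sum_negf) (use dist in \<open>auto simp: incidence_def\<close>)

end


lemma tri_edges_finite:
  assumes ost: "oriented_sphere_triangulation V F"
  shows "finite (tri_edges F)"
proof -
  have "tri_edges F \<subseteq> Pow V" using ost_facts(2)[OF ost] unfolding tri_edges_def by blast
  thus ?thesis using ost_facts(1)[OF ost] finite_subset by blast
qed

lemma tri_edge_obtain:
  assumes ost: "oriented_sphere_triangulation V F" and e: "e \<in> tri_edges F"
  obtains x y c c' where "e = {x,y}" "(x,y,c) \<in> F" "(y,x,c') \<in> F"
proof -
  from e obtain x y c where "e = {x,y}" "(x,y,c) \<in> F" unfolding tri_edges_def by blast
  moreover then obtain c' where "(y,x,c') \<in> F" using ost_facts(7)[OF ost] by blast
  ultimately show ?thesis using that by blast
qed

lemma col_zero: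
  assumes ost: "oriented_sphere_triangulation V F" and e: "e' \<in> tri_edges F"
  shows "(\<Sum>e\<in>tri_edges F. incidence v e * Emat F e e') = 0"
proof -
  obtain x y c c' where "e' = {x,y}" "(x,y,c) \<in> F" "(y,x,c') \<in> F" using tri_edge_obtain[OF ost e] by blast
  thus ?thesis using col_sum[OF ost] tri_edges_finite[OF ost] by blast
qed

lemma row_zero:
  assumes ost: "oriented_sphere_triangulation V F" and e: "e \<in> tri_edges F"
  shows "(\<Sum>e'\<in>tri_edges F. incidence v e' * Emat F e e') = 0"
proof -
  obtain x y c c' where "e = {x,y}" "(x,y,c) \<in> F" "(y,x,c') \<in> F" using tri_edge_obtain[OF ost e] by blast
  thus ?thesis using row_sum[OF ost] tri_edges_finite[OF ost] by (simp add: mult.commute)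
qed

lemma recon:
  fixes x :: "'v set \<Rightarrow> real"
  assumes fin: "finite TE" "finite V" and sub: "E0 \<subseteq> TE"
    and Binv: "is_block_inverse V (TE - E0) Rinv"
    and hx: "\<forall>v\<in>V. (\<Sum>e\<in>TE. incidence v e * x e) = 0" and e: "e \<in> TE"
  shows "x e = (\<Sum>f\<in>E0. M0 V E0 Rinv e f * x f)"
proof (cases "e \<in> E0")
  case True
  have fE0: "finite E0" using fin sub finite_subset by blast
  have "(\<Sum>f\<in>E0. M0 V E0 Rinv e f * x f) = (\<Sum>f\<in>E0. (if e = f then x f else 0))"
    by (rule sum.cong) (simp_all add: M0_def True)
  then show ?thesis using True fE0 by simp
next
  case False
  let ?B = "TE - E0"
  have eB: "e \<in> ?B" using e False by blast
  have s1: "\<forall>v\<in>V. (\<Sum>f\<in>E0. incidence v f * x f) = - (\<Sum>g\<in>?B. incidence v g * x g)"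
  proof
    fix v assume "v \<in> V"
    then have "(\<Sum>g\<in>?B. incidence v g * x g) + (\<Sum>f\<in>E0. incidence v f * x f) = 0"
      using hx sum.subset_diff[OF sub fin(1), of "\<lambda>e. incidence v e * x e"] by simp
    thus "(\<Sum>f\<in>E0. incidence v f * x f) = - (\<Sum>g\<in>?B. incidence v g * x g)" by linarith
  qed
  have "(\<Sum>f\<in>E0. M0 V E0 Rinv e f * x f) = (\<Sum>f\<in>E0. - (\<Sum>v\<in>V. Rinv e v * incidence v f) * x f)"
    by (simp add: M0_def False)
  also have "\<dots> = -(\<Sum>f\<in>E0. \<Sum>v\<in>V. Rinv e v * incidence v f * x f)"
    by (simp add: sum_distrib_right sum_negf)
  also have "\<dots> = -(\<Sum>v\<in>V. \<Sum>f\<in>E0. Rinv e v * incidence v f * x f)"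
    by (rule arg_cong[where f=uminus], rule sum.swap)
  also have "\<dots> = -(\<Sum>v\<in>V. Rinv e v * (\<Sum>f\<in>E0. incidence v f * x f))"
    by (simp add: sum_distrib_left mult.assoc)
  also have "\<dots> = -(\<Sum>v\<in>V. - (Rinv e v * (\<Sum>g\<in>?B. incidence v g * x g)))"
    by (rule arg_cong[where f=uminus], rule sum.cong, simp_all add: s1)
  also have "\<dots> = (\<Sum>v\<in>V. \<Sum>g\<in>?B. Rinv e v * incidence v g * x g)"
    by (simp add: sum_negf sum_distrib_left mult.assoc)
  also have "\<dots> = (\<Sum>g\<in>?B. \<Sum>v\<in>V. Rinv e v * incidence v g * x g)"
    by (rule sum.swap)
  also have "\<dots> = (\<Sum>g\<in>?B. (\<Sum>v\<in>V. Rinv e v * incidence v g) * x g)"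
    by (simp add: sum_distrib_right)
  also have "\<dots> = (\<Sum>g\<in>?B. (if e = g then 1 else 0) * x g)"
    using Binv eB by (intro sum.cong) (auto simp: is_block_inverse_def)
  also have "\<dots> = (\<Sum>g\<in>?B. (if e = g then x g else 0))" by (rule sum.cong) simp_all
  also have "\<dots> = x e" using eB fin by simp
  finally show ?thesis by simp
qed

lemma odd_cycle_zero:
  fixes zf :: "'v \<Rightarrow> real"
  assumes edge: "\<And>u w. {u,w} \<in> S \<Longrightarrow> zf u + zf w = 0"
    and conn: "\<forall>u\<in>V. \<forall>w\<in>V. (u,w) \<in> {(x,y). {x,y} \<in> S}\<^sup>*"
    and odd: "has_odd_cycle V S"
  shows "\<forall>v\<in>V. zf v = 0"
proof -
  have path: "\<bar>zf w\<bar> = \<bar>zf u\<bar>" if "(u,w) \<in> {(x,y). {x,y} \<in> S}\<^sup>*" for u w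
    using that
  proof (induction rule: rtrancl_induct)
    case base then show ?case by simp
  next
    case (step y z)
    then have "zf y + zf z = 0" using edge by blast
    then have "zf z = - zf y" by linarith
    then show ?case using step by simp
  qed
  from odd obtain vs where vs: "3 \<le> length vs" "odd (length vs)" "set vs \<subseteq> V"
    "\<forall>i < length vs. {vs ! i, vs ! ((i + 1) mod length vs)} \<in> S"
    unfolding has_odd_cycle_def by blast
  let ?L = "length vs"
  have alt: "zf (vs ! i) = (-1)^i * zf (vs ! 0)" if "i < ?L" for i
    using that
  proof (induction i)
    case 0 then show ?case by simp
  next
    case (Suc i)
    have m: "(i+1) mod ?L = Suc i" using Suc.prems by simp
    have "{vs ! i, vs ! Suc i} \<in> S" using vs(4)[rule_format, of i] Suc.prems m by simp
    then have "zf (vs ! i) + zf (vs ! Suc i) = 0" using edge by simp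
    then show ?case using Suc by simp
  qed
  have last: "{vs ! (?L - 1), vs ! 0} \<in> S"
  proof -
    have "Suc (?L - 1) = ?L" using vs(1) by simp
    hence "Suc (?L - 1) mod ?L = 0" by simp
    moreover have "?L - 1 < ?L" using vs(1) by simp
    ultimately show ?thesis using vs(4)[rule_format, of "?L - 1"] by simp
  qed
  have "zf (vs ! (?L - 1)) = zf (vs ! 0)"
    using alt[of "?L - 1"] vs(1,2) by simp
  moreover have "zf (vs ! (?L - 1)) + zf (vs ! 0) = 0" using edge last by blast
  ultimately have z0: "zf (vs ! 0) = 0" by linarith
  have v0: "vs ! 0 \<in> V" proof -
    have "0 < length vs" using vs(1) by linarith
    then have "vs ! 0 \<in> set vs" by (rule nth_mem)
    then show ?thesis using vs(3) by blast
  qed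
  show ?thesis
  proof
    fix v assume "v \<in> V"
    then have "\<bar>zf v\<bar> = \<bar>zf (vs ! 0)\<bar>" using path conn v0 by blast
    then show "zf v = 0" using z0 by simp
  qed
qed


lemma sum_pair:
  assumes "finite V" "u \<in> V" "w \<in> V" "u \<noteq> w"
  shows "(\<Sum>v\<in>V. incidence v {u,w} * zf v) = zf u + (zf w :: real)"
proof -
  have "(\<Sum>v\<in>V. incidence v {u,w} * zf v) = (\<Sum>v\<in>V. if v \<in> {u,w} then zf v else 0)"
    by (rule sum.cong) (simp_all add: incidence_def)
  also have "\<dots> = (\<Sum>v\<in>V \<inter> {u,w}. zf v)" using assms(1) by (simp add: sum.inter_restrict)
  also have "V \<inter> {u,w} = {u,w}" using assms by blast
  finally show ?thesis using assms(4) by simp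
qed

lemma block_inverse_exists:
  assumes ost: "oriented_sphere_triangulation V F"
    and cr: "crst V (tri_edges F) B"
    and odd: "has_odd_cycle V B"
  shows "\<exists>Rinv. is_block_inverse V B Rinv"
proof -
  have finV: "finite V" using ost_facts(1)[OF ost] .
  have BTE: "B \<subseteq> tri_edges F" and cB: "card B = card V"
    and conn: "\<forall>u\<in>V. \<forall>w\<in>V. (u, w) \<in> {(x, y). {x, y} \<in> B}\<^sup>*"
    using cr unfolding crst_def by blast+
  have finB: "finite B" using BTE tri_edges_finite[OF ost] finite_subset by blast
  define n where "n = card V"
  obtain hv where hv: "bij_betw hv {0..<n} V" using ex_bij_betw_nat_finite[OF finV] n_def by blast
  obtain hb where hb: "bij_betw hb {0..<n} B" using ex_bij_betw_nat_finite[OF finB] cB n_def by auto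
  define iv where "iv = inv_into {0..<n} hv"
  define ib where "ib = inv_into {0..<n} hb"
  have iv1: "\<And>i. i < n \<Longrightarrow> iv (hv i) = i" unfolding iv_def using bij_betw_inv_into_left[OF hv] by simp
  have iv2: "\<And>v. v \<in> V \<Longrightarrow> hv (iv v) = v" unfolding iv_def using bij_betw_inv_into_right[OF hv] by simp
  have iv3: "\<And>v. v \<in> V \<Longrightarrow> iv v < n" unfolding iv_def using bij_betw_inv_into[OF hv] bij_betwE by fastforce
  have ib1: "\<And>i. i < n \<Longrightarrow> ib (hb i) = i" unfolding ib_def using bij_betw_inv_into_left[OF hb] by simp
  have ib2: "\<And>v. v \<in> B \<Longrightarrow> hb (ib v) = v" unfolding ib_def using bij_betw_inv_into_right[OF hb] by simp
  have ib3: "\<And>v. v \<in> B \<Longrightarrow> ib v < n" unfolding ib_def using bij_betw_inv_into[OF hb] bij_betwE by fastforce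
  have hbB: "\<And>i. i < n \<Longrightarrow> hb i \<in> B" using hb bij_betwE by fastforce
  have hvV: "\<And>i. i < n \<Longrightarrow> hv i \<in> V" using hv bij_betwE by fastforce
  have reV: "(\<Sum>v\<in>V. g v) = (\<Sum>i<n. g (hv i))" for g
    using sum.reindex_bij_betw[OF hv, of g] by (simp add: lessThan_atLeast0)
  have reB: "(\<Sum>e\<in>B. g e) = (\<Sum>i<n. g (hb i))" for g
    using sum.reindex_bij_betw[OF hb, of g] by (simp add: lessThan_atLeast0)
  define g where "g i j = incidence (hv i) (hb j)" for i j
  have "\<exists>h. (\<forall>i<n. \<forall>j<n. (\<Sum>k<n. h i k * g k j) = (if i=j then 1 else 0))
           \<and> (\<forall>i<n. \<forall>j<n. (\<Sum>k<n. g i k * h k j) = (if i=j then 1 else 0))"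
  proof (rule mat_inv_exists)
    fix z :: "nat \<Rightarrow> real"
    assume hz: "\<forall>j<n. (\<Sum>i<n. g i j * z i) = 0"
    define zf where "zf v = z (iv v)" for v
    have edge: "zf u + zf w = 0" if uw: "{u,w} \<in> B" for u w
    proof -
      have "{u,w} \<in> tri_edges F" using uw BTE by blast
      then obtain a b c where abc: "{u,w} = {a,b}" "(a,b,c) \<in> F" unfolding tri_edges_def by blast
      have "a \<noteq> b" "a \<in> V" "b \<in> V" using abc(2) ost_facts(2,3)[OF ost] by blast+
      then have uwV: "u \<noteq> w" "u \<in> V" "w \<in> V" using abc(1) by (auto simp: doubleton_eq_iff)
      have j: "ib {u,w} < n" using ib3 uw by blast
      have "(\<Sum>i<n. g i (ib {u,w}) * z i) = 0" using hz j by blast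
      also have "(\<Sum>i<n. g i (ib {u,w}) * z i) = (\<Sum>i<n. incidence (hv i) {u,w} * zf (hv i))"
        by (rule sum.cong) (simp_all add: g_def ib2[OF uw] zf_def iv1)
      also have "\<dots> = (\<Sum>v\<in>V. incidence v {u,w} * zf v)" by (rule reV[symmetric])
      also have "\<dots> = zf u + zf w" using sum_pair[OF finV uwV(2,3,1)] .
      finally show ?thesis by simp
    qed
    have "\<forall>v\<in>V. zf v = 0" using odd_cycle_zero[of B zf V, OF edge conn odd] by blast
    then show "\<forall>i<n. z i = 0" using hvV iv1 unfolding zf_def by metis
  qed
  then obtain h where h1: "\<forall>i<n. \<forall>j<n. (\<Sum>k<n. h i k * g k j) = (if i=j then 1 else 0)"
    and h2: "\<forall>i<n. \<forall>j<n. (\<Sum>k<n. g i k * h k j) = (if i=j then 1 else 0)" by blast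
  define Rinv where "Rinv e v = h (ib e) (iv v)" for e v
  have "is_block_inverse V B Rinv"
    unfolding is_block_inverse_def
  proof (intro conjI ballI)
    fix e e' assume ee: "e \<in> B" "e' \<in> B"
    have "(\<Sum>v\<in>V. Rinv e v * incidence v e') = (\<Sum>k<n. h (ib e) k * g k (ib e'))"
      unfolding reV by (rule sum.cong) (simp_all add: Rinv_def g_def iv1 ib2 ee)
    also have "\<dots> = (if ib e = ib e' then 1 else 0)" using h1 ib3 ee by blast
    also have "\<dots> = (if e = e' then 1 else 0)" using ib2 ee by metis
    finally show "(\<Sum>v\<in>V. Rinv e v * incidence v e') = (if e = e' then 1 else 0)" .
  next
    fix v w assume vw: "v \<in> V" "w \<in> V"
    have "(\<Sum>e\<in>B. incidence v e * Rinv e w) = (\<Sum>k<n. g (iv v) k * h k (iv w))"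
      unfolding reB by (rule sum.cong) (simp_all add: Rinv_def g_def ib1 iv2 vw)
    also have "\<dots> = (if iv v = iv w then 1 else 0)" using h2 iv3 vw by blast
    also have "\<dots> = (if v = w then 1 else 0)" using iv2 vw by metis
    finally show "(\<Sum>e\<in>B. incidence v e * Rinv e w) = (if v = w then 1 else 0)" .
  qed
  then show ?thesis by blast
qed

theorem lemma3:
  fixes V :: "'v set" and F :: "('v \<times> 'v \<times> 'v) set" and E0 :: "'v set set" and N :: nat
  assumes "oriented_sphere_triangulation V F"
    and "card V = N + 3"
    and "E0 \<subseteq> tri_edges F"
    and "card E0 = 2 * N"
    and "crst V (tri_edges F) (tri_edges F - E0)"
    and "has_odd_cycle V (tri_edges F - E0)"
  shows "(\<exists>Rinv. is_block_inverse V (tri_edges F - E0) Rinv)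
    \<and> (\<forall>Rinv. is_block_inverse V (tri_edges F - E0) Rinv \<longrightarrow>
         (\<forall>e\<in>tri_edges F. \<forall>e'\<in>tri_edges F.
            Emat F e e' = (\<Sum>f\<in>E0. \<Sum>f'\<in>E0. M0 V E0 Rinv e f * Emat F f f' * M0 V E0 Rinv e' f')))"
proof (intro conjI allI impI ballI)
  note ost = assms(1)
  show "\<exists>Rinv. is_block_inverse V (tri_edges F - E0) Rinv"
    using block_inverse_exists[OF ost assms(5,6)] .
  fix Rinv e e' assume Binv: "is_block_inverse V (tri_edges F - E0) Rinv"
    and e: "e \<in> tri_edges F" and e': "e' \<in> tri_edges F"
  have fin: "finite (tri_edges F)" "finite V" using tri_edges_finite[OF ost] ost_facts(1)[OF ost] by blast+
  have "Emat F e e' = (\<Sum>f\<in>E0. M0 V E0 Rinv e f * Emat F f e')"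
    by (rule recon[OF fin assms(3) Binv _ e, where x="\<lambda>e. Emat F e e'"])
       (use col_zero[OF ost e'] in blast)
  also have "\<dots> = (\<Sum>f\<in>E0. M0 V E0 Rinv e f * (\<Sum>f'\<in>E0. M0 V E0 Rinv e' f' * Emat F f f'))"
  proof (rule sum.cong)
    fix f assume f: "f \<in> E0"
    then have fT: "f \<in> tri_edges F" using assms(3) by blast
    have "Emat F f e' = (\<Sum>f'\<in>E0. M0 V E0 Rinv e' f' * Emat F f f')"
      by (rule recon[OF fin assms(3) Binv _ e', where x="\<lambda>e'. Emat F f e'"])
         (use row_zero[OF ost fT] in blast)
    then show "M0 V E0 Rinv e f * Emat F f e' = M0 V E0 Rinv e f * (\<Sum>f'\<in>E0. M0 V E0 Rinv e' f' * Emat F f f')"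
      by simp
  qed simp
  also have "\<dots> = (\<Sum>f\<in>E0. \<Sum>f'\<in>E0. M0 V E0 Rinv e f * Emat F f f' * M0 V E0 Rinv e' f')"
    by (simp add: sum_distrib_left mult.commute mult.left_commute)
  finally show "Emat F e e' = (\<Sum>f\<in>E0. \<Sum>f'\<in>E0. M0 V E0 Rinv e f * Emat F f f' * M0 V E0 Rinv e' f')" .
qed

end
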